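(* Let $j\ge 0$ be an integer and let $g_0^{j+1},\dots,g_j^{j+1}$ be real numbers with $g_j^{j+1}>g_{j-1}^{j+1}>\dots>g_0^{j+1}>0$, where $g_{-1}^{j+1}:=0$. Let $\sigma_{j+1}$ satisfy $$\frac{g_j^{j+1}}{2g_j^{j+1}-g_{j-1}^{j+1}}\le\sigma_{j+1}\le 1 .$$ Then for any real numbers $v^0,\dots,v^{j+1}$, $$\big(\sigma_{j+1}v^{j+1}+(1-\sigma_{j+1})v^j\big)\,{}_g\Delta v\;\ge\;\tfrac12\,{}_g\Delta(v^2),$$ where ${}_g\Delta v:=\sum_{s=0}^{j}(v^{s+1}-v^s)g_s^{j+1}$ and ${}_g\Delta(v^2):=\sum_{s=0}^{j}((v^{s+1})^2-(v^s)^2)g_s^{j+1}$.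
   Context: In the paper this is stated for all $j=0,1,\dots,M-1$ with $v$ a function on a time mesh $0=t_0<\dots<t_M=T$, $v^s=v(t_s)$. *)

theory Defs
  imports Complex_Main
begin

text \<open>Weighted differences with weights g s = g_s^{j+1}, s = 0..j.\<close>
definition gDelta :: "nat \<Rightarrow> (nat \<Rightarrow> real) \<Rightarrow> (nat \<Rightarrow> real) \<Rightarrow> real" where
  "gDelta j g v = (\<Sum>s=0..j. (v (Suc s) - v s) * g s)"

definition gDelta_sq :: "nat \<Rightarrow> (nat \<Rightarrow> real) \<Rightarrow> (nat \<Rightarrow> real) \<Rightarrow> real" where
  "gDelta_sq j g v = (\<Sum>s=0..j. ((v (Suc s))^2 - (v s)^2) * g s)"

definition g_prev :: "nat \<Rightarrow> (nat \<Rightarrow> real) \<Rightarrow> real" where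
  "g_prev j g = (if j = 0 then 0 else g (j - 1))"

end

theory Submission
  imports Defs
begin

lemma gD_Suc: "gDelta (Suc k) g v = gDelta k g v + (v (Suc (Suc k)) - v (Suc k)) * g (Suc k)"
  by (simp add: gDelta_def)

lemma gDs_Suc: "gDelta_sq (Suc k) g v = gDelta_sq k g v + ((v (Suc (Suc k)))^2 - ((v (Suc k))^2)) * g (Suc k)"
  by (simp add: gDelta_sq_def)

lemma keyL:
  fixes g v :: "nat \<Rightarrow> real"
  assumes "g 0 \<ge> 0" and "\<And>s. s < j \<Longrightarrow> g s \<le> g (Suc s)"
  shows "x * gDelta j g v - gDelta_sq j g v / 2 \<ge> - ((x - v (Suc j))^2) * g j / 2"
  using assms(2)
proof (induction j)
  case 0
  have "x * gDelta 0 g v - gDelta_sq 0 g v / 2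
      = - ((x - v (Suc 0))^2) * g 0 / 2 + (x - v 0)^2 * g 0 / 2"
    by (simp add: gDelta_def gDelta_sq_def power2_eq_square) (simp add: field_simps)
  moreover have "(x - v 0)^2 * g 0 / 2 \<ge> 0" using assms(1) by simp
  ultimately show ?case by linarith
next
  case (Suc k)
  have IH: "x * gDelta k g v - gDelta_sq k g v / 2 \<ge> - ((x - v (Suc k))^2) * g k / 2"
    using Suc by simp
  have gk: "g k \<le> g (Suc k)" using Suc by simp
  have "(x - v (Suc k))^2 * g k \<le> (x - v (Suc k))^2 * g (Suc k)"
    using gk by (simp add: mult_left_mono)
  moreover have "x * gDelta (Suc k) g v - gDelta_sq (Suc k) g v / 2
     = (x * gDelta k g v - gDelta_sq k g v / 2) + (x - v (Suc k))^2 * g (Suc k) / 2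
       - (x - v (Suc (Suc k)))^2 * g (Suc k) / 2"
    by (simp add: gD_Suc gDs_Suc power2_eq_square) (simp add: field_simps)
  ultimately show ?case using IH by linarith
qed

theorem corollary1:
  fixes j :: nat and g v :: "nat \<Rightarrow> real" and \<sigma> :: real
  assumes g0: "g 0 > 0"
    and gmono: "\<And>s. s < j \<Longrightarrow> g s < g (Suc s)"
    and \<sigma>_lo: "g j / (2 * g j - g_prev j g) \<le> \<sigma>"
    and \<sigma>_hi: "\<sigma> \<le> 1"
  shows "(\<sigma> * v (Suc j) + (1 - \<sigma>) * v j) * gDelta j g v \<ge> gDelta_sq j g v / 2"
proof (cases j)
  case 0
  have s: "1/2 \<le> \<sigma>" using \<sigma>_lo g0 0 by (simp add: g_prev_def)
  have "(\<sigma> * v (Suc j) + (1 - \<sigma>) * v j) * gDelta j g v - gDelta_sq j g v / 2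
        = (2*\<sigma> - 1) * (v 1 - v 0)^2 * g 0 / 2"
    by (simp add: 0 gDelta_def gDelta_sq_def power2_eq_square) (simp add: field_simps)
  moreover have "(2*\<sigma> - 1) * (v 1 - v 0)^2 * g 0 / 2 \<ge> 0" using s g0 by simp
  ultimately show ?thesis by linarith
next
  case (Suc k)
  have mono: "\<And>s. s < k \<Longrightarrow> g s \<le> g (Suc s)" using gmono Suc by (simp add: less_imp_le)
  have gpos: "g s > 0" if "s \<le> j" for s
    using that
  proof (induction s)
    case 0 then show ?case using g0 by simp
  next
    case (Suc s)
    have "g s > 0" using Suc by simp
    moreover have "g s < g (Suc s)" using gmono Suc by simp
    ultimately show ?case by simp
  qed
  have gk: "g k > 0" using gpos Suc by simp
  have gkj: "g k < g j" using gmono Suc by simp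
  have gp: "g_prev j g = g k" using Suc by (simp add: g_prev_def)
  have den: "2 * g j - g k > 0" using gk gkj by simp
  have "g j \<le> \<sigma> * (2 * g j - g k)" using \<sigma>_lo gp den by (simp add: divide_le_eq)
  hence A: "(2*\<sigma> - 1) * g j \<ge> \<sigma> * g k" by (simp add: algebra_simps)
  have spos: "\<sigma> \<ge> 0"
  proof (rule ccontr)
    assume n: "\<not> \<sigma> \<ge> 0"
    hence "\<sigma> * g j \<le> \<sigma> * g k" using gkj by (simp add: mult_left_mono_neg)
    moreover have "(1 - \<sigma>) * g j > 0" using n gk gkj by simp
    ultimately show False using A by (simp add: algebra_simps)
  qed
  have "\<sigma> * \<sigma> * g k \<le> \<sigma> * g k" using spos \<sigma>_hi gk
    by (simp add: mult_left_le mult_le_cancel_right)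
  hence B: "(2*\<sigma> - 1) * g j - \<sigma>^2 * g k \<ge> 0" using A by (simp add: power2_eq_square)
  define x where "x = \<sigma> * v (Suc j) + (1 - \<sigma>) * v j"
  define a where "a = v (Suc j) - v j"
  have L: "x * gDelta k g v - gDelta_sq k g v / 2 \<ge> - ((x - v (Suc k))^2) * g k / 2"
    using keyL[of g k, OF less_imp_le[OF g0] mono] by simp
  have E: "x * gDelta j g v - gDelta_sq j g v / 2
     = (x * gDelta k g v - gDelta_sq k g v / 2) + (x - v j)^2 * g j / 2
       - ((x - v (Suc j))^2) * g j / 2"
    by (simp add: Suc gD_Suc gDs_Suc power2_eq_square) (simp add: field_simps)
  have x1: "(x - v (Suc k))^2 = (\<sigma> * a)^2" and x2: "(x - v (Suc (Suc k)))^2 = ((1-\<sigma>) * a)^2"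
    by (simp_all add: x_def a_def Suc power2_eq_square algebra_simps)
  have "x * gDelta j g v - gDelta_sq j g v / 2 \<ge>
     - ((\<sigma> * a)^2) * g k / 2 + (\<sigma> * a)^2 * g j / 2 - (((1-\<sigma>) * a)^2) * g j / 2"
    using E L unfolding Suc x1 x2 by linarith
  moreover have "- ((\<sigma> * a)^2) * g k / 2 + (\<sigma> * a)^2 * g j / 2 - (((1-\<sigma>) * a)^2) * g j / 2
      = a^2 * ((2*\<sigma> - 1) * g j - \<sigma>^2 * g k) / 2"
    by (simp add: power2_eq_square field_simps)
  moreover have "a^2 * ((2*\<sigma> - 1) * g j - \<sigma>^2 * g k) / 2 \<ge> 0" using B by simp
  ultimately show ?thesis unfolding x_def by linarith
qed

end
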